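(* Suppose Assumptions 1 and 2 hold, $J_0\ne\emptyset$, $0<\delta<1$, and Condition (L) holds for all $j=1,\dots,q$ with a constant $c'\in(0,1)$ satisfying Condition (C). Let $J\subseteq\{1,\dots,q\}$ with $|J|\le q^*$ and $J_0\setminus J\ne\emptyset$, and let $l=|J_0\setminus J|$. On the event $\mathcal E_{\delta,J\cup J_0}\cap\mathcal A$, $$\|\hat\Pi_{J_0}f\|_n^2-\|\hat\Pi_Jf\|_n^2\ge\frac12\frac{(1-\delta)^2}{1+\delta}(1-\rho_{q^*}^2)\kappa_l.$$
   Context: Let $q\ge1$ and let $(Y,X)$ be a pair of random variables with $X=(X_1,\dots,X_q)^T$, each $X_j$ real-valued, and $Y=\sum_{j=1}^q f_j(X_j)+\epsilon$, where $f_j\in L^2(\mathbb P^{X_j})$, $\mathbb E[f_j(X_j)]=0$ for $j=1,\dots,q-1$, and $\epsilon$ is a centered Gaussian variable with variance $\sigma^2$, independent of $X$. Write $f(x)=\sum_{j=1}^qf_j(x_j)$. The space $L^2(\mathbb P^X)$ carries the inner product $\langle g,h\rangle=\mathbb E[g(X)h(X)]$ and norm $\|g\|=\langle g,g\rangle^{1/2}$. Let $H_q=L^2(\mathbb P^{X_q})$ and $H_j=\{h\in L^2(\mathbb P^{X_j}):\mathbb E[h(X_j)]=0\}$ for $j<q$, viewed as subspaces of $L^2(\mathbb P^X)$ via $x\mapsto h(x_j)$; for $J\subseteq\{1,\dots,q\}$ let $H_J=\sum_{j\in J}H_j$ (with $H_\emptyset=\{0\}$). Let $J_0=\{j:\|f_j\|>0\}$,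 $s=|J_0|$, and let $q^*$ be an integer with $s\le q^*$. Let $\rho_{q^*}$ be the supremum of $\langle h_1,h_2\rangle/(\|h_1\|\|h_2\|)$ over all nonzero $h_1\in H_{J_1}$, $h_2\in H_{J_2}$ and all $J_1,J_2\subseteq\{1,\dots,q\}$ with $J_1\cap J_2=\emptyset$ and $|J_1|,|J_2|\le q^*$. Assumption 1 is the condition $\rho_{q^*}<1$. $\kappa=\min_{\emptyset\neq J\subseteq J_0}\|\sum_{j\in J}f_j\|^2$ and, for $1\le l\le s$, $\kappa_l=\min_{J'\subseteq J_0,|J'|=l}\|\sum_{j\in J'}f_j\|^2$. $\epsilon'_{q^*}$ is a positive number such that $\|\sum_{j\in J}g_j\|^2\le(1+\epsilon'_{q^*})\sum_{j\in J}\|g_j\|^2$ for all $J$ with $|J|\le q^*$ and all $g_j\in H_j$. Assumption 2: each $X_j$ takes values in $[0,1]$ and has a density $p_j$ with respect to Lebesgue measure with $c\le p_j\le 1/c$ for a constant $c>0$, and $f_j\in\tilde W_j(\alpha_j,K_j)=\{\sum_{k\ge1}\theta_k\phi_k:\sum_{k\ge1}(2\pi k)^{2\alpha_j}(\theta_{2k}^2+\theta_{2k+1}^2)\le K_j^2\}$ with $\alpha_j>1/2$, $K_j>0$, where $\phi_1=1$, $\phi_{2k}(x)=\sqrt2\cos(2\pi kx)$, $\phi_{2k+1}(x)=\sqrt2\sin(2\pi kx)$, $k\ge1$, on $[0,1]$. Given integers $m_j\ge1$, $V_j$ is the intersection of $H_j$ with the linear span of $\phi_1(x_j),\dots,\phi_{m_j}(x_j)$;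 $V_J=\sum_{j\in J}V_j$, $d_J=\dim V_J$, $d_l=\max_{|J|=l}d_J$; $\Pi_{V_j}$ is the orthogonal projection of $L^2(\mathbb P^X)$ onto $V_j$. $C_j>0$ denotes a constant depending only on $\alpha_j$ and $c$ such that $\|h-\Pi_{V_j}h\|^2\le C_jK_j^2m_j^{-2\alpha_j}$ and $\|h-\Pi_{V_j}h\|_\infty^2\le C_jK_j^2m_j^{1-2\alpha_j}$ for all $h\in\tilde W_j(\alpha_j,K_j)\cap H_j$ and all $m_j\ge1$. Condition (L): $m_j\ge\big(C_jK_j^2q^*(1+\epsilon'_{q^*})/(c'(1-\rho_{q^*}^2)\kappa)\big)^{1/(2\alpha_j)}$, where $c'\in(0,1)$ is a constant. Condition (C): $\frac23(1-\sqrt{c'})^2-8\frac{1+\delta}{(1-\delta)^2}c'\ge\frac12$. $X^1,\dots,X^n$ are independent copies of $X$. The empirical norm is $\|h\|_n^2=\frac1n\sum_{i=1}^nh(X^i)^2$ for functions and $\|u\|_n^2=\frac1n\|u\|_2^2$ for $u\in\mathbb R^n$. $\hat\Pi_J$ is the orthogonal projection of $\mathbb R^n$ onto $\{(g(X^1),\dots,g(X^n))^T:g\in V_J\}$, and for a function $h$ we write $\hat\Pi_Jh=\hat\Pi_J(h(X^1),\dots,h(X^n))^T$. For $0<\delta<1$ and $J\subseteq\{1,\dots,q\}$, $\mathcal E_{\delta,J}$ is the event that $(1-\delta)\|g\|^2\le\|g\|_n^2\le(1+\delta)\|g\|^2$ for all $g\in V_J$. $\mathcal A=\{\|f-\sum_{j\in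 J_0}\Pi_{V_j}f_j\|_n^2\le2c'(1-\rho_{q^*}^2)\kappa\}$. *)

theory Defs
  imports "HOL-Probability.Probability"
begin

text \<open>Points of the sample space are vectors x = (x_1,...,x_q) represented as
  functions nat \<Rightarrow> real (coordinates 1..q are the relevant ones).\<close>

definition lift :: "nat \<Rightarrow> (real \<Rightarrow> real) \<Rightarrow> (nat \<Rightarrow> real) \<Rightarrow> real" where
  "lift j h = (\<lambda>x. h (x j))"

definition L2sq :: "(nat \<Rightarrow> real) measure \<Rightarrow> ((nat \<Rightarrow> real) \<Rightarrow> real) \<Rightarrow> real" where
  "L2sq P g = (LINT x|P. (g x)\<^sup>2)"

definition inn :: "(nat \<Rightarrow> real) measure \<Rightarrow> ((nat \<Rightarrow> real) \<Rightarrow> real) \<Rightarrow> ((nat \<Rightarrow> real) \<Rightarrow> real) \<Rightarrow> real" where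
  "inn P g h = (LINT x|P. g x * h x)"

definition Hsp :: "(nat \<Rightarrow> real) measure \<Rightarrow> nat \<Rightarrow> nat \<Rightarrow> ((nat \<Rightarrow> real) \<Rightarrow> real) set" where
  "Hsp P q j = {lift j h | h. h \<in> borel_measurable borel \<and> integrable P (\<lambda>x. (h (x j))\<^sup>2)
      \<and> (j < q \<longrightarrow> (LINT x|P. h (x j)) = 0)}"

definition sumsp :: "(nat \<Rightarrow> ('a \<Rightarrow> real) set) \<Rightarrow> nat set \<Rightarrow> ('a \<Rightarrow> real) set" where
  "sumsp F J = {g. \<exists>gs. (\<forall>j\<in>J. gs j \<in> F j) \<and> g = (\<lambda>x. \<Sum>j\<in>J. gs j x)}"

text \<open>The value 0 is added to the set only to make the supremum
  well defined when no admissible pair exists (it never changes the supremum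
  otherwise, since the set is symmetric under h2 \<mapsto> -h2).\<close>
definition rho :: "(nat \<Rightarrow> real) measure \<Rightarrow> nat \<Rightarrow> nat \<Rightarrow> real" where
  "rho P q qs = Sup ({inn P h1 h2 / (sqrt (L2sq P h1) * sqrt (L2sq P h2)) | J1 J2 h1 h2.
      J1 \<subseteq> {1..q} \<and> J2 \<subseteq> {1..q} \<and> J1 \<inter> J2 = {} \<and> card J1 \<le> qs \<and> card J2 \<le> qs \<and>
      h1 \<in> sumsp (Hsp P q) J1 \<and> h2 \<in> sumsp (Hsp P q) J2 \<and> L2sq P h1 > 0 \<and> L2sq P h2 > 0} \<union> {0})"

definition phi :: "nat \<Rightarrow> real \<Rightarrow> real" where
  "phi k x = (if k = 1 then 1
     else if even k then sqrt 2 * cos (2 * pi * real (k div 2) * x)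
     else sqrt 2 * sin (2 * pi * real (k div 2) * x))"

definition sob :: "real \<Rightarrow> real \<Rightarrow> (real \<Rightarrow> real) set" where
  "sob \<alpha> K = {h. \<exists>\<theta> :: nat \<Rightarrow> real.
      summable (\<lambda>k. (2 * pi * real (k + 1)) powr (2 * \<alpha>) * ((\<theta> (2 * (k + 1)))\<^sup>2 + (\<theta> (2 * (k + 1) + 1))\<^sup>2))
    \<and> (\<Sum>k. (2 * pi * real (k + 1)) powr (2 * \<alpha>) * ((\<theta> (2 * (k + 1)))\<^sup>2 + (\<theta> (2 * (k + 1) + 1))\<^sup>2)) \<le> K\<^sup>2
    \<and> (\<forall>x\<in>{0..1}. (\<lambda>k. \<theta> (k + 1) * phi (k + 1) x) sums h x)}"

definition Vsp :: "(nat \<Rightarrow> real) measure \<Rightarrow> nat \<Rightarrow> nat \<Rightarrow> nat \<Rightarrow> ((nat \<Rightarrow> real) \<Rightarrow> real) set" where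
  "Vsp P q j m = {g \<in> Hsp P q j. \<exists>a :: nat \<Rightarrow> real. g = (\<lambda>x. \<Sum>k=1..m. a k * phi k (x j))}"

definition is_proj :: "(nat \<Rightarrow> real) measure \<Rightarrow> ((nat \<Rightarrow> real) \<Rightarrow> real) set \<Rightarrow> ((nat \<Rightarrow> real) \<Rightarrow> real)
    \<Rightarrow> ((nat \<Rightarrow> real) \<Rightarrow> real) \<Rightarrow> bool" where
  "is_proj P V h g \<longleftrightarrow> g \<in> V \<and> (\<forall>v\<in>V. inn P (\<lambda>x. h x - g x) v = 0)"

text \<open>Sample X^1..X^n indexed by a finite type 'n with n = CARD('n).\<close>
definition emp_sq :: "('n::finite \<Rightarrow> nat \<Rightarrow> real) \<Rightarrow> ((nat \<Rightarrow> real) \<Rightarrow> real) \<Rightarrow> real" where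
  "emp_sq Xs g = (\<Sum>i\<in>UNIV. (g (Xs i))\<^sup>2) / real CARD('n)"

definition svec :: "('n::finite \<Rightarrow> nat \<Rightarrow> real) \<Rightarrow> ((nat \<Rightarrow> real) \<Rightarrow> real) \<Rightarrow> real ^ 'n" where
  "svec Xs g = (\<chi> i. g (Xs i))"

definition is_vproj :: "(real ^ 'n::finite) set \<Rightarrow> real ^ 'n \<Rightarrow> real ^ 'n \<Rightarrow> bool" where
  "is_vproj S v u \<longleftrightarrow> u \<in> S \<and> (\<forall>w\<in>S. (v - u) \<bullet> w = 0)"

definition VJ :: "(nat \<Rightarrow> real) measure \<Rightarrow> nat \<Rightarrow> (nat \<Rightarrow> nat) \<Rightarrow> nat set \<Rightarrow> ((nat \<Rightarrow> real) \<Rightarrow> real) set" where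
  "VJ P q m J = sumsp (\<lambda>j. Vsp P q j (m j)) J"

definition Eev :: "(nat \<Rightarrow> real) measure \<Rightarrow> nat \<Rightarrow> (nat \<Rightarrow> nat) \<Rightarrow> ('n::finite \<Rightarrow> nat \<Rightarrow> real) \<Rightarrow> real \<Rightarrow> nat set \<Rightarrow> bool" where
  "Eev P q m Xs \<delta> J \<longleftrightarrow> (\<forall>g\<in>VJ P q m J.
      (1 - \<delta>) * L2sq P g \<le> emp_sq Xs g \<and> emp_sq Xs g \<le> (1 + \<delta>) * L2sq P g)"

definition J0set :: "(nat \<Rightarrow> real) measure \<Rightarrow> nat \<Rightarrow> (nat \<Rightarrow> real \<Rightarrow> real) \<Rightarrow> nat set" where
  "J0set P q f = {j \<in> {1..q}. L2sq P (lift j (f j)) > 0}"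

definition kappa :: "(nat \<Rightarrow> real) measure \<Rightarrow> nat \<Rightarrow> (nat \<Rightarrow> real \<Rightarrow> real) \<Rightarrow> real" where
  "kappa P q f = Min {L2sq P (\<lambda>x. \<Sum>j\<in>J'. f j (x j)) | J'. J' \<subseteq> J0set P q f \<and> J' \<noteq> {}}"

definition kappa_l :: "(nat \<Rightarrow> real) measure \<Rightarrow> nat \<Rightarrow> (nat \<Rightarrow> real \<Rightarrow> real) \<Rightarrow> nat \<Rightarrow> real" where
  "kappa_l P q f l = Min {L2sq P (\<lambda>x. \<Sum>j\<in>J'. f j (x j)) | J'. J' \<subseteq> J0set P q f \<and> card J' = l}"

end

theory Submission
  imports Defs
begin


definition SQ :: "'a measure \<Rightarrow> ('a \<Rightarrow> real) \<Rightarrow> bool" where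
  "SQ M h \<longleftrightarrow> h \<in> borel_measurable M \<and> integrable M (\<lambda>x. (h x)\<^sup>2)"

lemma SQ_prod: assumes "SQ M a" "SQ M b" shows "integrable M (\<lambda>x. a x * b x)"
proof -
  have m: "a \<in> borel_measurable M" "b \<in> borel_measurable M" using assms by (auto simp: SQ_def)
  have i: "integrable M (\<lambda>x. (a x)\<^sup>2 + (b x)\<^sup>2)" using assms by (auto simp: SQ_def)
  show ?thesis
  proof (rule Bochner_Integration.integrable_bound[OF i])
    show "(\<lambda>x. a x * b x) \<in> borel_measurable M" using m by measurable
    show "AE x in M. norm (a x * b x) \<le> norm ((a x)\<^sup>2 + (b x)\<^sup>2)"
    proof (rule AE_I2)
      fix x
      have "2 * \<bar>a x * b x\<bar> \<le> (a x)\<^sup>2 + (b x)\<^sup>2"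
        using sum_squares_bound[of "\<bar>a x\<bar>" "\<bar>b x\<bar>"] by (simp add: abs_mult)
      moreover have "0 \<le> (a x)\<^sup>2 + (b x)\<^sup>2" by simp
      ultimately show "norm (a x * b x) \<le> norm ((a x)\<^sup>2 + (b x)\<^sup>2)" by simp
    qed
  qed
qed

lemma SQ_add: assumes "SQ M a" "SQ M b" shows "SQ M (\<lambda>x. a x + b x)"
proof -
  have m: "a \<in> borel_measurable M" "b \<in> borel_measurable M" using assms by (auto simp: SQ_def)
  have "integrable M (\<lambda>x. (a x)\<^sup>2 + 2 * (a x * b x) + (b x)\<^sup>2)"
    using assms SQ_prod[OF assms] by (auto simp: SQ_def)
  moreover have "(\<lambda>x. (a x)\<^sup>2 + 2 * (a x * b x) + (b x)\<^sup>2) = (\<lambda>x. (a x + b x)\<^sup>2)"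
    by (auto simp: power2_eq_square algebra_simps)
  ultimately show ?thesis using m by (auto simp: SQ_def)
qed

lemma SQ_scale: assumes "SQ M a" shows "SQ M (\<lambda>x. c * a x)"
proof -
  have "(\<lambda>x. (c * a x)\<^sup>2) = (\<lambda>x. c\<^sup>2 * (a x)\<^sup>2)" by (auto simp: power2_eq_square)
  thus ?thesis using assms by (auto simp: SQ_def)
qed

lemma SQ_minus: assumes "SQ M a" "SQ M b" shows "SQ M (\<lambda>x. a x - b x)"
  using SQ_add[OF assms(1) SQ_scale[OF assms(2), of "-1"]] by simp

lemma SQ_zero: "SQ M (\<lambda>x. 0)" by (simp add: SQ_def)

lemma SQ_sum: assumes "finite J" "\<And>j. j \<in> J \<Longrightarrow> SQ M (gs j)"
  shows "SQ M (\<lambda>x. \<Sum>j\<in>J. gs j x)"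
  using assms
proof (induction J rule: finite_induct)
  case empty thus ?case by (simp add: SQ_zero)
next
  case (insert a F)
  have "SQ M (\<lambda>x. gs a x + (\<Sum>j\<in>F. gs j x))"
    by (rule SQ_add) (use insert in auto)
  thus ?case using insert by simp
qed

lemma L2sq_nonneg: "0 \<le> L2sq M h" unfolding L2sq_def by simp

lemma L2sq_add: assumes "SQ M a" "SQ M b"
  shows "L2sq M (\<lambda>x. a x + b x) = L2sq M a + 2 * inn M a b + L2sq M b"
proof -
  have "(\<lambda>x. (a x + b x)\<^sup>2) = (\<lambda>x. (a x)\<^sup>2 + 2 * (a x * b x) + (b x)\<^sup>2)"
    by (auto simp: power2_eq_square algebra_simps)
  thus ?thesis using assms SQ_prod[OF assms] unfolding L2sq_def inn_def SQ_def
    by simp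
qed

lemma L2sq_scale: "L2sq M (\<lambda>x. c * a x) = c\<^sup>2 * L2sq M a"
proof -
  have "(\<lambda>x. (c * a x)\<^sup>2) = (\<lambda>x. c\<^sup>2 * (a x)\<^sup>2)" by (auto simp: power2_eq_square)
  thus ?thesis by (simp add: L2sq_def)
qed

lemma inn_scale: "inn M a (\<lambda>x. c * b x) = c * inn M a b"
  by (simp add: inn_def mult.left_commute)

lemma CS: assumes "SQ M a" "SQ M b"
  shows "\<bar>inn M a b\<bar> \<le> sqrt (L2sq M a) * sqrt (L2sq M b)"
proof -
  let ?A = "L2sq M a" and ?B = "L2sq M b" and ?I = "inn M a b"
  have q: "0 \<le> ?A + 2 * t * ?I + t\<^sup>2 * ?B" for t
  proof -
    have "L2sq M (\<lambda>x. a x + t * b x) = ?A + 2 * inn M a (\<lambda>x. t * b x) + L2sq M (\<lambda>x. t * b x)"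
      by (rule L2sq_add[OF assms(1) SQ_scale[OF assms(2)]])
    thus ?thesis using L2sq_nonneg[of M "\<lambda>x. a x + t * b x"] by (simp add: inn_scale L2sq_scale)
  qed
  have A0: "0 \<le> ?A" "0 \<le> ?B" by (auto simp: L2sq_nonneg)
  have "?I\<^sup>2 \<le> ?A * ?B"
  proof (cases "?B = 0")
    case True
    have "?I = 0"
    proof (rule ccontr)
      assume "?I \<noteq> 0"
      have "0 \<le> ?A + 2 * (- (?A + 1) / (2 * ?I)) * ?I" using q[of "- (?A + 1) / (2 * ?I)"] True by simp
      thus False using \<open>?I \<noteq> 0\<close> by (simp add: field_simps)
    qed
    thus ?thesis using True by simp
  next
    case False
    hence Bp: "?B > 0" using A0 by simp
    have "0 \<le> ?A + 2 * (- ?I / ?B) * ?I + (- ?I / ?B)\<^sup>2 * ?B" by (rule q)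
    also have "\<dots> = ?A - ?I\<^sup>2 / ?B" using Bp by (simp add: field_simps power2_eq_square)
    finally show ?thesis using Bp by (simp add: field_simps)
  qed
  hence "sqrt (?I\<^sup>2) \<le> sqrt (?A * ?B)" by (rule real_sqrt_le_mono)
  thus ?thesis by (simp add: real_sqrt_mult)
qed

lemma mink: assumes "SQ M a" "SQ M b"
  shows "sqrt (L2sq M (\<lambda>x. a x + b x)) \<le> sqrt (L2sq M a) + sqrt (L2sq M b)"
proof -
  have "L2sq M (\<lambda>x. a x + b x) \<le> (sqrt (L2sq M a) + sqrt (L2sq M b))\<^sup>2"
    using L2sq_add[OF assms] CS[OF assms] L2sq_nonneg[of M a] L2sq_nonneg[of M b]
    by (simp add: power2_eq_square algebra_simps)
  hence "sqrt (L2sq M (\<lambda>x. a x + b x)) \<le> sqrt ((sqrt (L2sq M a) + sqrt (L2sq M b))\<^sup>2)"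
    by (rule real_sqrt_le_mono)
  thus ?thesis using L2sq_nonneg[of M a] L2sq_nonneg[of M b] by simp
qed

lemma comp_meas: assumes "sets P = sets (PiM {1..q} (\<lambda>_. borel))" "j \<in> {1..q}"
  shows "(\<lambda>x. x j) \<in> measurable P (borel :: real measure)"
proof -
  have "(\<lambda>x. x j) \<in> measurable (PiM {1..q} (\<lambda>_. borel :: real measure)) borel"
    using assms(2) by (rule measurable_component_singleton)
  thus ?thesis by (simp add: measurable_cong_sets[OF assms(1) refl])
qed

lemma lift_SQ: assumes "sets P = sets (PiM {1..q} (\<lambda>_. borel))" "j \<in> {1..q}"
  "h \<in> borel_measurable borel" "integrable P (\<lambda>x. (h (x j))\<^sup>2)"
  shows "SQ P (lift j h)"
proof -
  have "(\<lambda>x. h (x j)) \<in> borel_measurable P"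
    using measurable_comp[OF comp_meas[OF assms(1,2)] assms(3)] by (simp add: o_def)
  thus ?thesis using assms(4) by (simp add: SQ_def lift_def)
qed

lemma Hsp_SQ: assumes "sets P = sets (PiM {1..q} (\<lambda>_. borel))" "j \<in> {1..q}" "a \<in> Hsp P q j"
  shows "SQ P a"
  using assms lift_SQ[OF assms(1,2)] unfolding Hsp_def by (auto simp: lift_def)

lemma Hsp_diff: assumes PP: "prob_space P" and S: "sets P = sets (PiM {1..q} (\<lambda>_. borel))"
  and j: "j \<in> {1..q}" and a: "a \<in> Hsp P q j" and b: "b \<in> Hsp P q j"
  shows "(\<lambda>x. a x - b x) \<in> Hsp P q j"
proof -
  interpret prob_space P by (rule PP)
  obtain ha where ha: "a = lift j ha" "ha \<in> borel_measurable borel" "integrable P (\<lambda>x. (ha (x j))\<^sup>2)"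
      "j < q \<longrightarrow> (LINT x|P. ha (x j)) = 0" using a unfolding Hsp_def by auto
  obtain hb where hb: "b = lift j hb" "hb \<in> borel_measurable borel" "integrable P (\<lambda>x. (hb (x j))\<^sup>2)"
      "j < q \<longrightarrow> (LINT x|P. hb (x j)) = 0" using b unfolding Hsp_def by auto
  have sa: "SQ P (\<lambda>x. ha (x j))" using lift_SQ[OF S j ha(2,3)] by (simp add: lift_def)
  have sb: "SQ P (\<lambda>x. hb (x j))" using lift_SQ[OF S j hb(2,3)] by (simp add: lift_def)
  have ia: "integrable P (\<lambda>x. ha (x j))" using sa square_integrable_imp_integrable by (auto simp: SQ_def)
  have ib: "integrable P (\<lambda>x. hb (x j))" using sb square_integrable_imp_integrable by (auto simp: SQ_def)
  have "SQ P (\<lambda>x. ha (x j) - hb (x j))" by (rule SQ_minus[OF sa sb])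
  moreover have "(LINT x|P. ha (x j) - hb (x j)) = (LINT x|P. ha (x j)) - (LINT x|P. hb (x j))"
    using ia ib by simp
  moreover have "(\<lambda>t. ha t - hb t) \<in> borel_measurable borel" using ha(2) hb(2) by measurable
  ultimately show ?thesis unfolding Hsp_def using ha hb
    by (auto simp: lift_def SQ_def intro!: exI[of _ "\<lambda>t. ha t - hb t"])
qed

lemma Hsp_zero: "(\<lambda>x. 0) \<in> Hsp P q j"
  unfolding Hsp_def by (auto simp: lift_def intro!: exI[of _ "\<lambda>t. 0"])

lemma Hsp_neg: assumes "prob_space P" "sets P = sets (PiM {1..q} (\<lambda>_. borel))"
  "j \<in> {1..q}" "a \<in> Hsp P q j" shows "(\<lambda>x. - a x) \<in> Hsp P q j"
  using Hsp_diff[OF assms(1-3) Hsp_zero assms(4)] by simp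

lemma Vsp_Hsp: "Vsp P q j m \<subseteq> Hsp P q j" unfolding Vsp_def by auto

lemma Vsp_zero: "(\<lambda>x. 0) \<in> Vsp P q j m"
  unfolding Vsp_def using Hsp_zero by (auto intro!: exI[of _ "\<lambda>k. 0"])

lemma Vsp_diff: assumes PP: "prob_space P" and S: "sets P = sets (PiM {1..q} (\<lambda>_. borel))"
  and j: "j \<in> {1..q}" and a: "a \<in> Vsp P q j m" and b: "b \<in> Vsp P q j m"
  shows "(\<lambda>x. a x - b x) \<in> Vsp P q j m"
proof -
  obtain ca where ca: "a = (\<lambda>x. \<Sum>k=1..m. ca k * phi k (x j))" using a unfolding Vsp_def by auto
  obtain cb where cb: "b = (\<lambda>x. \<Sum>k=1..m. cb k * phi k (x j))" using b unfolding Vsp_def by auto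
  have "(\<lambda>x. a x - b x) = (\<lambda>x. \<Sum>k=1..m. (ca k - cb k) * phi k (x j))"
    unfolding ca cb by (auto simp: sum_subtractf left_diff_distrib)
  moreover have "(\<lambda>x. a x - b x) \<in> Hsp P q j" using Hsp_diff[OF PP S j] a b Vsp_Hsp by blast
  ultimately show ?thesis unfolding Vsp_def
    by (auto intro!: exI[of _ "\<lambda>k. ca k - cb k"])
qed

lemma sumsp_SQ: assumes S: "sets P = sets (PiM {1..q} (\<lambda>_. borel))" and J: "J \<subseteq> {1..q}"
  and h: "h \<in> sumsp (Hsp P q) J" shows "SQ P h"
proof -
  obtain gs where gs: "\<forall>j\<in>J. gs j \<in> Hsp P q j" "h = (\<lambda>x. \<Sum>j\<in>J. gs j x)"
    using h unfolding sumsp_def by auto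
  have "finite J" using J finite_subset by blast
  thus ?thesis unfolding gs(2) using gs(1) J Hsp_SQ[OF S] by (intro SQ_sum) auto
qed


lemma corr_le1: assumes "SQ M a" "SQ M b" "L2sq M a > 0" "L2sq M b > 0"
  shows "inn M a b / (sqrt (L2sq M a) * sqrt (L2sq M b)) \<le> 1"
proof -
  have "inn M a b \<le> sqrt (L2sq M a) * sqrt (L2sq M b)" using CS[OF assms(1,2)] by simp
  moreover have "sqrt (L2sq M a) * sqrt (L2sq M b) > 0" using assms(3,4) by simp
  ultimately show ?thesis by simp
qed

lemma rho_upper: assumes S: "sets P = sets (PiM {1..q} (\<lambda>_. borel))"
  and "J1 \<subseteq> {1..q}" "J2 \<subseteq> {1..q}" "J1 \<inter> J2 = {}" "card J1 \<le> qs" "card J2 \<le> qs"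
  "h1 \<in> sumsp (Hsp P q) J1" "h2 \<in> sumsp (Hsp P q) J2" "L2sq P h1 > 0" "L2sq P h2 > 0"
  shows "inn P h1 h2 / (sqrt (L2sq P h1) * sqrt (L2sq P h2)) \<le> rho P q qs"
  unfolding rho_def
  apply (rule cSup_upper)
  using assms apply blast
  apply (rule bdd_aboveI[where M=1])
  using corr_le1 sumsp_SQ[OF S] by fastforce

lemma rho_nonneg: assumes S: "sets P = sets (PiM {1..q} (\<lambda>_. borel))"
  shows "0 \<le> rho P q qs"
  unfolding rho_def
  apply (rule cSup_upper)
   apply blast
  apply (rule bdd_aboveI[where M=1])
  using corr_le1 sumsp_SQ[OF S] by fastforce

lemma sumsp_neg: assumes "prob_space P" "sets P = sets (PiM {1..q} (\<lambda>_. borel))"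
  "J \<subseteq> {1..q}" "h \<in> sumsp (Hsp P q) J"
  shows "(\<lambda>x. - h x) \<in> sumsp (Hsp P q) J"
proof -
  obtain gs where gs: "\<forall>j\<in>J. gs j \<in> Hsp P q j" "h = (\<lambda>x. \<Sum>j\<in>J. gs j x)"
    using assms(4) unfolding sumsp_def by auto
  have "\<forall>j\<in>J. (\<lambda>x. - gs j x) \<in> Hsp P q j" using gs(1) Hsp_neg[OF assms(1,2)] assms(3) by blast
  moreover have "(\<lambda>x. - h x) = (\<lambda>x. \<Sum>j\<in>J. - gs j x)" unfolding gs(2) by (simp add: sum_negf)
  ultimately show ?thesis unfolding sumsp_def mem_Collect_eq
    by (intro exI[of _ "\<lambda>j x. - gs j x"]) simp
qed

lemma L2sq_neg: "L2sq M (\<lambda>x. - h x) = L2sq M h" by (simp add: L2sq_def)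
lemma inn_neg: "inn M a (\<lambda>x. - h x) = - inn M a h" by (simp add: inn_def)

lemma divmul_helper: "(b::real) > 0 \<Longrightarrow> a / b * b = a" by simp

lemma rho_key: assumes PP: "prob_space P" and S: "sets P = sets (PiM {1..q} (\<lambda>_. borel))"
  and J: "J1 \<subseteq> {1..q}" "J2 \<subseteq> {1..q}" "J1 \<inter> J2 = {}" "card J1 \<le> qs" "card J2 \<le> qs"
  and h: "h1 \<in> sumsp (Hsp P q) J1" "h2 \<in> sumsp (Hsp P q) J2"
  shows "(1 - (rho P q qs)\<^sup>2) * L2sq P h1 \<le> L2sq P (\<lambda>x. h1 x + h2 x)"
proof -
  let ?r = "rho P q qs" and ?A = "sqrt (L2sq P h1)" and ?B = "sqrt (L2sq P h2)"
  have s1: "SQ P h1" and s2: "SQ P h2" using sumsp_SQ[OF S] J h by auto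
  have r0: "0 \<le> ?r" by (rule rho_nonneg[OF S])
  have key: "- ?r * ?A * ?B \<le> inn P h1 h2"
  proof (cases "L2sq P h1 > 0 \<and> L2sq P h2 > 0")
    case True
    have "inn P h1 (\<lambda>x. - h2 x) / (sqrt (L2sq P h1) * sqrt (L2sq P (\<lambda>x. - h2 x))) \<le> ?r"
      using rho_upper[OF S J h(1) sumsp_neg[OF PP S J(2) h(2)]] True by (simp add: L2sq_neg)
    hence "- inn P h1 h2 / (?A * ?B) \<le> ?r" by (simp add: L2sq_neg inn_neg)
    moreover have "?A * ?B > 0" using True by simp
    ultimately have "- inn P h1 h2 / (?A * ?B) * (?A * ?B) \<le> ?r * (?A * ?B)"
      by (intro mult_right_mono) auto
    moreover have "- inn P h1 h2 / (?A * ?B) * (?A * ?B) = - inn P h1 h2"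
      using \<open>?A * ?B > 0\<close> divmul_helper by blast
    ultimately have "- inn P h1 h2 \<le> ?r * (?A * ?B)" by simp
    thus ?thesis by simp
  next
    case False
    hence "L2sq P h1 = 0 \<or> L2sq P h2 = 0" using L2sq_nonneg[of P h1] L2sq_nonneg[of P h2] by linarith
    hence "inn P h1 h2 = 0" using CS[OF s1 s2] by auto
    thus ?thesis using False \<open>L2sq P h1 = 0 \<or> L2sq P h2 = 0\<close> by auto
  qed
  have eq: "L2sq P (\<lambda>x. h1 x + h2 x) = ?A\<^sup>2 + 2 * inn P h1 h2 + ?B\<^sup>2"
    using L2sq_add[OF s1 s2] L2sq_nonneg[of P h1] L2sq_nonneg[of P h2] by simp
  have "(1 - ?r\<^sup>2) * ?A\<^sup>2 \<le> ?A\<^sup>2 - 2 * ?r * ?A * ?B + ?B\<^sup>2"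
    using zero_le_power2[of "?B - ?r * ?A"] by (simp add: power2_eq_square algebra_simps)
  also have "\<dots> \<le> L2sq P (\<lambda>x. h1 x + h2 x)" using eq key by simp
  finally show ?thesis using L2sq_nonneg[of P h1] by simp
qed


lemma sum_if_sub: assumes "finite A" "B \<subseteq> A"
  shows "(\<Sum>j\<in>A. if j \<in> B then a j else (0::real)) = (\<Sum>j\<in>B. a j)"
proof -
  have "A \<inter> B = B" using assms by blast
  thus ?thesis using assms by (simp add: sum.If_cases)
qed

lemma norm_svec: "(norm (svec Xs h))\<^sup>2 = real CARD('n) * emp_sq (Xs :: 'n::finite \<Rightarrow> nat \<Rightarrow> real) h"
  unfolding emp_sq_def svec_def norm_vec_def L2_set_def by (simp add: sum_nonneg)

lemma svec_diff: "svec Xs (\<lambda>x. a x - b x) = svec Xs a - svec Xs b"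
  by (simp add: svec_def vec_eq_iff)

lemma norm_add_sq: "(norm (a + b))\<^sup>2 = (norm a)\<^sup>2 + 2 * (a \<bullet> b) + (norm (b::'a::real_inner))\<^sup>2"
  by (simp add: power2_norm_eq_inner inner_add_left inner_add_right inner_commute[of b a])

lemma vproj_opt: assumes "is_vproj S v u" "w \<in> S"
  shows "(norm (v - u))\<^sup>2 \<le> (norm (v - w))\<^sup>2"
proof -
  have o1: "(v - u) \<bullet> u = 0" "(v - u) \<bullet> w = 0" using assms unfolding is_vproj_def by auto
  have "v - w = (v - u) + (u - w)" by simp
  hence "(norm (v - w))\<^sup>2 = (norm (v - u))\<^sup>2 + 2 * ((v - u) \<bullet> (u - w)) + (norm (u - w))\<^sup>2"
    by (metis norm_add_sq)
  moreover have "(v - u) \<bullet> (u - w) = 0" using o1 by (simp add: inner_diff_right)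
  ultimately show ?thesis by simp
qed

lemma vproj_pyth: assumes "is_vproj S v u"
  shows "(norm u)\<^sup>2 = (norm v)\<^sup>2 - (norm (v - u))\<^sup>2"
proof -
  have o1: "(v - u) \<bullet> u = 0" using assms unfolding is_vproj_def by auto
  have "v = (v - u) + u" by simp
  hence "(norm v)\<^sup>2 = (norm (v - u))\<^sup>2 + 2 * ((v - u) \<bullet> u) + (norm u)\<^sup>2"
    by (metis norm_add_sq)
  thus ?thesis using o1 by simp
qed

lemma norm_sum_lower: "(norm (a::'a::real_inner))\<^sup>2 - 2 * norm a * norm b + (norm b)\<^sup>2 \<le> (norm (a + b))\<^sup>2"
proof -
  have "(norm (a + b))\<^sup>2 = (norm a)\<^sup>2 + 2 * (a \<bullet> b) + (norm b)\<^sup>2"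
    by (rule norm_add_sq)
  moreover have "- (norm a * norm b) \<le> a \<bullet> b" using norm_cauchy_schwarz[of a "-b"] by simp
  ultimately show ?thesis by simp
qed

lemma half_mono: "(Y::real) \<le> Z \<Longrightarrow> 1/2 * Y \<le> Z / 2" by simp

lemma final_alg: fixes \<delta> c' :: real
  assumes "0 < \<delta>" "\<delta> < 1" "0 < c'" "c' < 1"
    "2/3 * (1 - sqrt c')\<^sup>2 - 8 * (1 + \<delta>) / (1 - \<delta>)\<^sup>2 * c' \<ge> 1/2"
  shows "1/2 * ((1 - \<delta>)\<^sup>2 / (1 + \<delta>)) \<le> 2/3 * (1 - \<delta>) * (1 - sqrt c')\<^sup>2 - 6 * c'"
proof -
  define x where "x = (1 - sqrt c')\<^sup>2"
  have d: "0 < 1 - \<delta>" using assms by simp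
  have a5: "2/3 * x - 8 * (1 + \<delta>) / (1 - \<delta>)\<^sup>2 * c' \<ge> 1/2" using assms(5) x_def by simp
  have "(1 - \<delta>) * (1/2) \<le> (1 - \<delta>) * (2/3 * x - 8 * (1 + \<delta>) / (1 - \<delta>)\<^sup>2 * c')"
    using a5 d by (intro mult_left_mono) auto
  also have "\<dots> = 2/3 * (1 - \<delta>) * x - (1 - \<delta>) * ((8 * (1 + \<delta>) / (1 - \<delta>) * c') / (1 - \<delta>))"
    by (simp add: power2_eq_square right_diff_distrib)
  also have "\<dots> = 2/3 * (1 - \<delta>) * x - 8 * (1 + \<delta>) / (1 - \<delta>) * c'"
    using d by simp
  finally have 1: "(1 - \<delta>) / 2 \<le> 2/3 * (1 - \<delta>) * x - 8 * (1 + \<delta>) / (1 - \<delta>) * c'" by simp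
  have e8: "8 \<le> 8 * (1 + \<delta>) / (1 - \<delta>)" using d assms(1) by (simp add: field_simps)
  have "6 * c' \<le> 8 * (1 + \<delta>) / (1 - \<delta>) * c'" using assms(3)
    using mult_right_mono[OF e8, of c'] by linarith
  hence 2: "(1 - \<delta>) / 2 \<le> 2/3 * (1 - \<delta>) * x - 6 * c'" using 1 by linarith
  have "(1 - \<delta>)\<^sup>2 / (1 + \<delta>) \<le> 1 - \<delta>" using assms(1,2) by (simp add: field_simps power2_eq_square)
  hence "1/2 * ((1 - \<delta>)\<^sup>2 / (1 + \<delta>)) \<le> (1 - \<delta>) / 2" by (rule half_mono)
  hence "1/2 * ((1 - \<delta>)\<^sup>2 / (1 + \<delta>)) \<le> 2/3 * (1 - \<delta>) * x - 6 * c'" using 2 by (rule order.trans)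
  thus ?thesis unfolding x_def .
qed



lemma helper_div: "(a::real) \<noteq> 0 \<Longrightarrow> q \<noteq> 0 \<Longrightarrow> e \<noteq> 0 \<Longrightarrow> a * (1 / (a * q * e / z)) = z / (q * e)"
  by (simp add: field_simps)

lemma helper_alg: "(N::real) * (A * (2/3 * d * x - 6 * c)) = 2/3 * (N * (d * x * A)) - 3 * (N * (2 * c * A))"
  by (simp add: field_simps)

lemma helper_div2: "(e::real) \<noteq> 0 \<Longrightarrow> q \<noteq> 0 \<Longrightarrow> e * (q * (z / (q * e))) = z"
  by (simp add: field_simps)

theorem proposition6:
  fixes P :: "(nat \<Rightarrow> real) measure" and q qs :: nat
    and f :: "nat \<Rightarrow> real \<Rightarrow> real" and p :: "nat \<Rightarrow> real \<Rightarrow> real"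
    and c c' \<delta> eps' :: real and \<alpha> K C :: "nat \<Rightarrow> real" and m :: "nat \<Rightarrow> nat"
    and Xs :: "'n::finite \<Rightarrow> nat \<Rightarrow> real" and J :: "nat set"
    and g :: "nat \<Rightarrow> (nat \<Rightarrow> real) \<Rightarrow> real"
  defines "J0 \<equiv> J0set P q f"
    and "F \<equiv> (\<lambda>x. \<Sum>j=1..q. f j (x j))"
    and "\<rho> \<equiv> rho P q qs"
    and "\<kappa> \<equiv> kappa P q f"
    and "\<kappa>l \<equiv> kappa_l P q f (card (J0set P q f - J))"
  assumes P: "prob_space P" "sets P = sets (PiM {1..q} (\<lambda>_. borel))" "q \<ge> 1"
    and f_L2: "\<forall>j\<in>{1..q}. f j \<in> borel_measurable borel \<and> integrable P (\<lambda>x. (f j (x j))\<^sup>2)"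
    and f_centered: "\<forall>j\<in>{1..q}. j < q \<longrightarrow> (LINT x|P. f j (x j)) = 0"
    and s_le: "card J0 \<le> qs"
    and A1: "\<rho> < 1"
    and A2_c: "c > 0"
    and A2: "\<forall>j\<in>{1..q}. p j \<in> borel_measurable borel \<and> (\<forall>t. 0 \<le> p j t)
        \<and> distr P borel (\<lambda>x. x j) = density lborel (\<lambda>t. ennreal (p j t))
        \<and> (AE x in P. x j \<in> {0..1})
        \<and> (\<forall>t\<in>{0..1}. c \<le> p j t \<and> p j t \<le> 1 / c)
        \<and> \<alpha> j > 1/2 \<and> K j > 0 \<and> f j \<in> sob (\<alpha> j) (K j)"
    and eps': "eps' > 0"
      "\<forall>J'. J' \<subseteq> {1..q} \<and> card J' \<le> qs \<longrightarrow> (\<forall>gs. (\<forall>j\<in>J'. gs j \<in> Hsp P q j) \<longrightarrow>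
          L2sq P (\<lambda>x. \<Sum>j\<in>J'. gs j x) \<le> (1 + eps') * (\<Sum>j\<in>J'. L2sq P (gs j)))"
    and C: "\<forall>j\<in>{1..q}. C j > 0 \<and> (\<forall>h mm gg. h \<in> sob (\<alpha> j) (K j) \<and> lift j h \<in> Hsp P q j \<and> mm \<ge> 1
        \<and> is_proj P (Vsp P q j mm) (lift j h) gg \<longrightarrow>
          L2sq P (\<lambda>x. lift j h x - gg x) \<le> C j * (K j)\<^sup>2 * real mm powr (- 2 * \<alpha> j)
          \<and> (AE x in P. (lift j h x - gg x)\<^sup>2 \<le> C j * (K j)\<^sup>2 * real mm powr (1 - 2 * \<alpha> j)))"
    and J0_ne: "J0 \<noteq> {}"
    and delta: "0 < \<delta>" "\<delta> < 1"
    and c': "0 < c'" "c' < 1"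
    and condL: "\<forall>j\<in>{1..q}. m j \<ge> 1 \<and>
        real (m j) \<ge> (C j * (K j)\<^sup>2 * real qs * (1 + eps') / (c' * (1 - \<rho>\<^sup>2) * \<kappa>)) powr (1 / (2 * \<alpha> j))"
    and condC: "2/3 * (1 - sqrt c')\<^sup>2 - 8 * (1 + \<delta>) / (1 - \<delta>)\<^sup>2 * c' \<ge> 1/2"
    and J: "J \<subseteq> {1..q}" "card J \<le> qs" "J0 - J \<noteq> {}"
    and g_proj: "\<forall>j\<in>J0. is_proj P (Vsp P q j (m j)) (lift j (f j)) (g j)"
    and event_E: "Eev P q m Xs \<delta> (J \<union> J0)"
    and event_A: "emp_sq Xs (\<lambda>x. F x - (\<Sum>j\<in>J0. g j x)) \<le> 2 * c' * (1 - \<rho>\<^sup>2) * \<kappa>"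
  shows "\<forall>u0 u. is_vproj (svec Xs ` VJ P q m J0) (svec Xs F) u0
              \<and> is_vproj (svec Xs ` VJ P q m J) (svec Xs F) u \<longrightarrow>
           (norm u0)\<^sup>2 / real CARD('n) - (norm u)\<^sup>2 / real CARD('n)
             \<ge> 1/2 * ((1 - \<delta>)\<^sup>2 / (1 + \<delta>)) * (1 - \<rho>\<^sup>2) * \<kappa>l"
proof (intro allI impI)
  fix u0 u
  assume uu: "is_vproj (svec Xs ` VJ P q m J0) (svec Xs F) u0 \<and> is_vproj (svec Xs ` VJ P q m J) (svec Xs F) u"
  have PP: "prob_space P" by (rule P(1))
  have S: "sets P = sets (PiM {1..q} (\<lambda>_. borel))" by (rule P(2))
  have J0sub: "J0 \<subseteq> {1..q}" unfolding J0_def J0set_def by auto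
  have finJ0: "finite J0" using J0sub finite_subset by blast
  have finJ: "finite J" using J(1) finite_subset by blast
  have r0: "0 \<le> \<rho>" unfolding \<rho>_def by (rule rho_nonneg[OF S])
  have "\<rho>\<^sup>2 \<le> \<rho>" using r0 A1 by (simp add: power2_eq_square mult_left_le)
  hence r1: "0 < 1 - \<rho>\<^sup>2" using A1 by linarith
  have r2: "1 - \<rho>\<^sup>2 \<le> 1" by simp
  have "card J0 \<ge> 1" using finJ0 J0_ne by (simp add: Suc_le_eq card_gt_0_iff)
  hence qs1: "1 \<le> qs" using s_le by linarith
  have fH: "lift j (f j) \<in> Hsp P q j" if "j \<in> {1..q}" for j
    unfolding Hsp_def mem_Collect_eq
    by (rule exI[of _ "f j"]) (use f_L2 f_centered that in auto)
  have fsum: "(\<lambda>x. \<Sum>j\<in>J'. f j (x j)) \<in> sumsp (Hsp P q) J'" if "J' \<subseteq> {1..q}" for J'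
    unfolding sumsp_def mem_Collect_eq
    by (rule exI[of _ "\<lambda>j. lift j (f j)"]) (use fH that in \<open>auto simp: lift_def\<close>)

  have Kpos: "0 < L2sq P (\<lambda>x. \<Sum>j\<in>J'. f j (x j))" if J': "J' \<subseteq> J0" "J' \<noteq> {}" for J'
  proof -
    obtain j where j: "j \<in> J'" using J' by blast
    have J'sub: "J' \<subseteq> {1..q}" using J' J0sub by blast
    have fin': "finite J'" using J'sub finite_subset by blast
    have cJ': "card J' \<le> qs" using card_mono[OF finJ0 J'(1)] s_le by linarith
    have cJ'': "card (J' - {j}) \<le> qs" using card_mono[OF fin', of "J' - {j}"] cJ' by auto
    have jJ0: "j \<in> J0" using J' j by blast
    have pos: "L2sq P (lift j (f j)) > 0" using jJ0 unfolding J0_def J0set_def by auto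
    have h1: "lift j (f j) \<in> sumsp (Hsp P q) {j}"
      using fsum[of "{j}"] J'sub j by (auto simp: lift_def)
    have h2: "(\<lambda>x. \<Sum>i\<in>J'-{j}. f i (x i)) \<in> sumsp (Hsp P q) (J'-{j})"
      by (rule fsum) (use J'sub in blast)
    have "(1 - \<rho>\<^sup>2) * L2sq P (lift j (f j)) \<le> L2sq P (\<lambda>x. lift j (f j) x + (\<Sum>i\<in>J'-{j}. f i (x i)))"
      unfolding \<rho>_def
      by (rule rho_key[OF PP S _ _ _ _ _ h1 h2]) (use J'sub j cJ'' qs1 in auto)
    moreover have "(\<lambda>x. lift j (f j) x + (\<Sum>i\<in>J'-{j}. f i (x i))) = (\<lambda>x. \<Sum>i\<in>J'. f i (x i))"
      by (simp add: lift_def sum.remove[OF fin' j])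
    ultimately show ?thesis using pos r1 by (metis mult_pos_pos less_le_trans)
  qed
  define KS where "KS = {L2sq P (\<lambda>x. \<Sum>j\<in>J'. f j (x j)) | J'. J' \<subseteq> J0 \<and> J' \<noteq> {}}"
  have KSfin: "finite KS" unfolding KS_def
    by (rule finite_image_set) (rule finite_subset[of _ "Pow J0"], auto simp: finJ0)
  have KSne: "KS \<noteq> {}" unfolding KS_def using J0_ne by blast
  have kappa_eq: "\<kappa> = Min KS" unfolding \<kappa>_def kappa_def KS_def J0_def by simp
  have kpos: "0 < \<kappa>" unfolding kappa_eq using Min_gr_iff[OF KSfin KSne] Kpos unfolding KS_def by auto

  define l where "l = card (J0 - J)"
  have Dfin: "finite (J0 - J)" using finJ0 by simp
  have lpos: "0 < l" unfolding l_def using Dfin J(3) by (simp add: card_gt_0_iff)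
  define KL where "KL = {L2sq P (\<lambda>x. \<Sum>j\<in>J'. f j (x j)) | J'. J' \<subseteq> J0 \<and> card J' = l}"
  have kl_eq: "\<kappa>l = Min KL" unfolding \<kappa>l_def kappa_l_def KL_def l_def J0_def by simp
  have KLfin: "finite KL" unfolding KL_def
    by (rule finite_image_set) (rule finite_subset[of _ "Pow J0"], auto simp: finJ0)
  have KLmem: "L2sq P (\<lambda>x. \<Sum>j\<in>J0-J. f j (x j)) \<in> KL" unfolding KL_def l_def by blast
  have kl_le: "\<kappa>l \<le> L2sq P (\<lambda>x. \<Sum>j\<in>J0-J. f j (x j))" unfolding kl_eq using Min_le[OF KLfin KLmem] .
  have KLne: "KL \<noteq> {}" using KLmem by blast
  have k_le: "\<kappa> \<le> \<kappa>l"
  proof -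
    have "Min KL \<in> KL" using Min_in[OF KLfin KLne] .
    then obtain J' where J': "J' \<subseteq> J0" "card J' = l" "Min KL = L2sq P (\<lambda>x. \<Sum>j\<in>J'. f j (x j))"
      unfolding KL_def by blast
    have "J' \<noteq> {}" using J' lpos by auto
    hence "Min KL \<in> KS" using J' unfolding KS_def by blast
    thus ?thesis unfolding kappa_eq kl_eq using Min_le[OF KSfin] by blast
  qed
  have klpos: "0 < \<kappa>l" using kpos k_le by linarith

  have gV: "g j \<in> Vsp P q j (m j)" if "j \<in> J0" for j using g_proj that unfolding is_proj_def by auto
  define e where "e = (\<lambda>j x. lift j (f j) x - g j x)"
  have eH: "e j \<in> Hsp P q j" if j: "j \<in> J0" for j
  proof -
    have j1: "j \<in> {1..q}" using j J0sub by blast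
    show ?thesis unfolding e_def by (rule Hsp_diff[OF PP S j1 fH[OF j1]]) (use gV[OF j] Vsp_Hsp in blast)
  qed
  define bnd where "bnd = c' * (1 - \<rho>\<^sup>2) * \<kappa> / (real qs * (1 + eps'))"
  have bnd0: "0 \<le> bnd" unfolding bnd_def using c' r1 kpos eps'(1) by simp
  have ebound: "L2sq P (e j) \<le> bnd" if j: "j \<in> J0" for j
  proof -
    have j1: "j \<in> {1..q}" using j J0sub by blast
    have Cj: "C j > 0" using C j1 by blast
    have Kj: "K j > 0" and aj: "\<alpha> j > 1/2" and sobj: "f j \<in> sob (\<alpha> j) (K j)" using A2 j1 by auto
    have mj: "m j \<ge> 1" using condL j1 by blast
    have "L2sq P (\<lambda>x. lift j (f j) x - g j x) \<le> C j * (K j)\<^sup>2 * real (m j) powr (- 2 * \<alpha> j)"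
      using C j1 sobj fH[OF j1] mj g_proj j by blast
    hence L: "L2sq P (e j) \<le> C j * (K j)\<^sup>2 * real (m j) powr (- 2 * \<alpha> j)" unfolding e_def .
    define X where "X = C j * (K j)\<^sup>2 * real qs * (1 + eps') / (c' * (1 - \<rho>\<^sup>2) * \<kappa>)"
    have Xpos: "X > 0" unfolding X_def using Cj Kj qs1 eps'(1) c' r1 kpos by simp
    have mX: "X powr (1 / (2 * \<alpha> j)) \<le> real (m j)" using condL j1 unfolding X_def by blast
    have "real (m j) powr (- 2 * \<alpha> j) \<le> (X powr (1 / (2 * \<alpha> j))) powr (- 2 * \<alpha> j)"
      by (rule powr_mono2') (use aj Xpos mX in auto)
    also have "\<dots> = X powr (1 / (2 * \<alpha> j) * (- 2 * \<alpha> j))" by (rule powr_powr)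
    also have "1 / (2 * \<alpha> j) * (- 2 * \<alpha> j) = -1" using aj by simp
    also have "X powr -1 = 1 / X" using Xpos by (rule powr_neg_one)
    finally have mb: "real (m j) powr (- 2 * \<alpha> j) \<le> 1 / X" .
    have "C j * (K j)\<^sup>2 * real (m j) powr (- 2 * \<alpha> j) \<le> C j * (K j)\<^sup>2 * (1 / X)"
      using mb Cj Kj by (intro mult_left_mono) auto
    also have "C j * (K j)\<^sup>2 * (1 / X) = bnd"
      unfolding X_def bnd_def by (rule helper_div) (use Cj Kj qs1 eps'(1) in auto)
    finally show ?thesis using L by linarith
  qed
  have Esum: "L2sq P (\<lambda>x. \<Sum>j\<in>J0-J. e j x) \<le> c' * \<kappa>l"
  proof -
    have sub: "J0 - J \<subseteq> {1..q}" using J0sub by blast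
    have cD: "card (J0 - J) \<le> qs" using card_mono[OF finJ0, of "J0 - J"] s_le by auto
    have "L2sq P (\<lambda>x. \<Sum>j\<in>J0-J. e j x) \<le> (1 + eps') * (\<Sum>j\<in>J0-J. L2sq P (e j))"
      using eps'(2) sub cD eH by blast
    also have "(\<Sum>j\<in>J0-J. L2sq P (e j)) \<le> real (card (J0 - J)) * bnd"
      using sum_bounded_above[of "J0 - J" "\<lambda>j. L2sq P (e j)" bnd] ebound by auto
    also have "\<dots> \<le> real qs * bnd" using cD bnd0 by (intro mult_right_mono) auto
    finally have "L2sq P (\<lambda>x. \<Sum>j\<in>J0-J. e j x) \<le> (1 + eps') * (real qs * bnd)"
      using eps'(1) by (smt (verit) mult_left_mono)
    also have "(1 + eps') * (real qs * bnd) = c' * (1 - \<rho>\<^sup>2) * \<kappa>"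
      unfolding bnd_def by (rule helper_div2) (use qs1 eps'(1) in auto)
    also have "\<dots> \<le> c' * 1 * \<kappa>l"
      using c' r1 r2 kpos k_le by (intro mult_mono) auto
    finally show ?thesis by simp
  qed

  define h1 where "h1 = (\<lambda>x. \<Sum>j\<in>J0-J. g j x)"
  define Sf where "Sf = (\<lambda>x. \<Sum>j\<in>J0-J. f j (x j))"
  define E where "E = (\<lambda>x. \<Sum>j\<in>J0-J. e j x)"
  have Sf_eq: "Sf = (\<lambda>x. h1 x + E x)"
    unfolding Sf_def h1_def E_def e_def lift_def by (simp add: sum.distrib[symmetric])
  have subD: "J0 - J \<subseteq> {1..q}" using J0sub by blast
  have h1S: "h1 \<in> sumsp (Hsp P q) (J0-J)" unfolding sumsp_def mem_Collect_eq h1_def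
    by (rule exI[of _ g]) (use gV Vsp_Hsp in blast)
  have ES: "E \<in> sumsp (Hsp P q) (J0-J)" unfolding sumsp_def mem_Collect_eq E_def
    by (rule exI[of _ e]) (use eH in blast)
  have sqh1: "SQ P h1" by (rule sumsp_SQ[OF S subD h1S])
  have sqE: "SQ P E" by (rule sumsp_SQ[OF S subD ES])
  have m1: "sqrt (L2sq P Sf) \<le> sqrt (L2sq P h1) + sqrt (L2sq P E)" unfolding Sf_eq by (rule mink[OF sqh1 sqE])
  have m2: "sqrt \<kappa>l \<le> sqrt (L2sq P Sf)" unfolding Sf_def using kl_le by (rule real_sqrt_le_mono)
  have m3: "sqrt (L2sq P E) \<le> sqrt c' * sqrt \<kappa>l"
    using real_sqrt_le_mono[OF Esum] unfolding E_def by (simp add: real_sqrt_mult)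
  have m4: "(1 - sqrt c') * sqrt \<kappa>l = sqrt \<kappa>l - sqrt c' * sqrt \<kappa>l" by (simp add: algebra_simps)
  have hh: "(1 - sqrt c') * sqrt \<kappa>l \<le> sqrt (L2sq P h1)" using m1 m2 m3 m4 by linarith
  have sc1: "sqrt c' < 1" using c' by simp
  have "0 \<le> (1 - sqrt c') * sqrt \<kappa>l" using sc1 klpos by simp
  hence "((1 - sqrt c') * sqrt \<kappa>l)\<^sup>2 \<le> (sqrt (L2sq P h1))\<^sup>2" using power_mono[OF hh] by blast
  hence h1low: "(1 - sqrt c')\<^sup>2 * \<kappa>l \<le> L2sq P h1"
    using klpos L2sq_nonneg[of P h1] by (simp add: power_mult_distrib)

  define fst where "fst = (\<lambda>x. \<Sum>j\<in>J0. g j x)"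
  have fstV: "fst \<in> VJ P q m J0" unfolding VJ_def sumsp_def mem_Collect_eq fst_def
    by (rule exI[of _ g]) (use gV in blast)
  have uS: "u \<in> svec Xs ` VJ P q m J" using uu unfolding is_vproj_def by blast
  then obtain v' where v': "v' \<in> VJ P q m J" "u = svec Xs v'" by blast
  obtain vs where vs: "\<forall>j\<in>J. vs j \<in> Vsp P q j (m j)" "v' = (\<lambda>x. \<Sum>j\<in>J. vs j x)"
    using v'(1) unfolding VJ_def sumsp_def by blast
  define ds where "ds = (\<lambda>j x. (if j \<in> J0 then g j x else 0) - (if j \<in> J then vs j x else 0))"
  have dsV: "ds j \<in> Vsp P q j (m j)" if j: "j \<in> J \<union> J0" for j
  proof -
    have j1: "j \<in> {1..q}" using j J0sub J(1) by blast
    have G: "(if j \<in> J0 then g j else (\<lambda>x. 0)) \<in> Vsp P q j (m j)" using gV Vsp_zero by auto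
    have V: "(if j \<in> J then vs j else (\<lambda>x. 0)) \<in> Vsp P q j (m j)" using vs(1) Vsp_zero by auto
    have "ds j = (\<lambda>x. (if j \<in> J0 then g j else (\<lambda>x. 0)) x - (if j \<in> J then vs j else (\<lambda>x. 0)) x)"
      unfolding ds_def by auto
    thus ?thesis using Vsp_diff[OF PP S j1 G V] by simp
  qed
  define diff where "diff = (\<lambda>x. fst x - v' x)"
  have finU: "finite (J \<union> J0)" using finJ finJ0 by simp
  have diff_eq: "diff = (\<lambda>x. \<Sum>j\<in>J\<union>J0. ds j x)"
  proof
    fix x
    have "(\<Sum>j\<in>J\<union>J0. ds j x) = (\<Sum>j\<in>J\<union>J0. if j \<in> J0 then g j x else 0) - (\<Sum>j\<in>J\<union>J0. if j \<in> J then vs j x else 0)"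
      unfolding ds_def by (simp add: sum_subtractf)
    also have "\<dots> = (\<Sum>j\<in>J0. g j x) - (\<Sum>j\<in>J. vs j x)"
      using sum_if_sub[OF finU, of J0 "\<lambda>j. g j x"] sum_if_sub[OF finU, of J "\<lambda>j. vs j x"] by simp
    finally show "diff x = (\<Sum>j\<in>J\<union>J0. ds j x)" unfolding diff_def fst_def vs(2) by simp
  qed
  have diffVJ: "diff \<in> VJ P q m (J \<union> J0)" unfolding VJ_def sumsp_def mem_Collect_eq diff_eq
    by (rule exI[of _ ds]) (use dsV in blast)
  have empd: "(1 - \<delta>) * L2sq P diff \<le> emp_sq Xs diff" using event_E diffVJ unfolding Eev_def by blast
  define h2 where "h2 = (\<lambda>x. \<Sum>j\<in>J. ds j x)"
  have diff_split: "diff = (\<lambda>x. h1 x + h2 x)"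
  proof
    fix x
    have U: "J \<union> J0 = (J0 - J) \<union> J" by blast
    have "(\<Sum>j\<in>J\<union>J0. ds j x) = (\<Sum>j\<in>J0-J. ds j x) + (\<Sum>j\<in>J. ds j x)"
      unfolding U by (rule sum.union_disjoint) (use finJ0 finJ in auto)
    moreover have "(\<Sum>j\<in>J0-J. ds j x) = (\<Sum>j\<in>J0-J. g j x)" by (rule sum.cong) (auto simp: ds_def)
    ultimately show "diff x = h1 x + h2 x" unfolding diff_eq h1_def h2_def by simp
  qed
  have h2S: "h2 \<in> sumsp (Hsp P q) J" unfolding sumsp_def mem_Collect_eq h2_def
    by (rule exI[of _ ds]) (use dsV Vsp_Hsp in blast)
  have cD: "card (J0 - J) \<le> qs" using card_mono[OF finJ0, of "J0 - J"] s_le by auto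
  have rk: "(1 - \<rho>\<^sup>2) * L2sq P h1 \<le> L2sq P diff" unfolding diff_split \<rho>_def
    by (rule rho_key[OF PP S subD J(1) _ cD J(2) h1S h2S]) blast
  have D0: "(1 - \<delta>) * ((1 - \<rho>\<^sup>2) * ((1 - sqrt c')\<^sup>2 * \<kappa>l)) \<le> emp_sq Xs diff"
  proof -
    have "(1 - \<rho>\<^sup>2) * ((1 - sqrt c')\<^sup>2 * \<kappa>l) \<le> (1 - \<rho>\<^sup>2) * L2sq P h1"
      using h1low r1 by (intro mult_left_mono) auto
    also have "\<dots> \<le> L2sq P diff" by (rule rk)
    finally have "(1 - \<delta>) * ((1 - \<rho>\<^sup>2) * ((1 - sqrt c')\<^sup>2 * \<kappa>l)) \<le> (1 - \<delta>) * L2sq P diff"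
      using delta by (intro mult_left_mono) auto
    thus ?thesis using empd by linarith
  qed
  define r where "r = (\<lambda>x. F x - fst x)"
  have R0: "emp_sq Xs r \<le> 2 * c' * (1 - \<rho>\<^sup>2) * \<kappa>l"
  proof -
    have "emp_sq Xs r \<le> 2 * c' * (1 - \<rho>\<^sup>2) * \<kappa>" using event_A unfolding r_def fst_def .
    also have "\<dots> \<le> 2 * c' * (1 - \<rho>\<^sup>2) * \<kappa>l" using k_le c' r1 by (intro mult_left_mono) auto
    finally show ?thesis .
  qed

  define N where "N = real CARD('n)"
  have Npos: "0 < N" unfolding N_def by simp
  define v where "v = svec Xs F"
  have pu0: "is_vproj (svec Xs ` VJ P q m J0) v u0" using uu unfolding v_def by blast
  have pu: "is_vproj (svec Xs ` VJ P q m J) v u" using uu unfolding v_def by blast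
  have a1: "(norm (v - u0))\<^sup>2 \<le> (norm (svec Xs r))\<^sup>2"
  proof -
    have "(norm (v - u0))\<^sup>2 \<le> (norm (v - svec Xs fst))\<^sup>2" using vproj_opt[OF pu0] fstV by blast
    moreover have "v - svec Xs fst = svec Xs r" unfolding v_def r_def svec_diff ..
    ultimately show ?thesis by simp
  qed
  have a3: "v - u = svec Xs diff + svec Xs r"
    unfolding v_def r_def diff_def svec_diff v'(2) by simp
  have a4: "(norm (svec Xs diff))\<^sup>2 - 2 * norm (svec Xs diff) * norm (svec Xs r) + (norm (svec Xs r))\<^sup>2
      \<le> (norm (v - u))\<^sup>2" unfolding a3 by (rule norm_sum_lower)
  define a where "a = norm (svec Xs diff)"
  define b where "b = norm (svec Xs r)"
  have aa: "a\<^sup>2 = N * emp_sq Xs diff" unfolding a_def N_def by (rule norm_svec)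
  have bb: "b\<^sup>2 = N * emp_sq Xs r" unfolding b_def N_def by (rule norm_svec)
  have ab: "2 * a * b \<le> a\<^sup>2 / 3 + 3 * b\<^sup>2"
  proof -
    have "0 \<le> (a - 3 * b)\<^sup>2 / 3" by simp
    thus ?thesis by (simp add: power2_eq_square algebra_simps)
  qed
  have diffsq: "(norm u0)\<^sup>2 - (norm u)\<^sup>2 = (norm (v - u))\<^sup>2 - (norm (v - u0))\<^sup>2"
    using vproj_pyth[OF pu0] vproj_pyth[OF pu] by simp
  have main1: "2/3 * a\<^sup>2 - 3 * b\<^sup>2 \<le> (norm u0)\<^sup>2 - (norm u)\<^sup>2"
    using diffsq a1 a4 ab unfolding a_def[symmetric] b_def[symmetric] by linarith
  define A where "A = (1 - \<rho>\<^sup>2) * \<kappa>l"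
  have A0: "0 \<le> A" unfolding A_def using r1 klpos by simp
  have ea: "N * ((1 - \<delta>) * (1 - sqrt c')\<^sup>2 * A) \<le> a\<^sup>2"
    unfolding aa A_def using D0 Npos by (intro mult_left_mono) (auto simp: algebra_simps)
  have eb: "b\<^sup>2 \<le> N * (2 * c' * A)"
    unfolding bb A_def using R0 Npos by (intro mult_left_mono) (auto simp: algebra_simps)
  have "N * (A * (2/3 * (1 - \<delta>) * (1 - sqrt c')\<^sup>2 - 6 * c')) = 2/3 * (N * ((1 - \<delta>) * (1 - sqrt c')\<^sup>2 * A)) - 3 * (N * (2 * c' * A))"
    by (rule helper_alg)
  also have "\<dots> \<le> 2/3 * a\<^sup>2 - 3 * b\<^sup>2" using ea eb by linarith
  also have "\<dots> \<le> (norm u0)\<^sup>2 - (norm u)\<^sup>2" by (rule main1)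
  finally have m2: "N * (A * (2/3 * (1 - \<delta>) * (1 - sqrt c')\<^sup>2 - 6 * c')) \<le> (norm u0)\<^sup>2 - (norm u)\<^sup>2" .
  have fa: "1/2 * ((1 - \<delta>)\<^sup>2 / (1 + \<delta>)) \<le> 2/3 * (1 - \<delta>) * (1 - sqrt c')\<^sup>2 - 6 * c'"
    by (rule final_alg[OF delta c' condC])
  have "N * (A * (1/2 * ((1 - \<delta>)\<^sup>2 / (1 + \<delta>)))) \<le> N * (A * (2/3 * (1 - \<delta>) * (1 - sqrt c')\<^sup>2 - 6 * c'))"
    using fa A0 Npos by (intro mult_left_mono) auto
  also note m2
  finally have m3: "N * (A * (1/2 * ((1 - \<delta>)\<^sup>2 / (1 + \<delta>)))) \<le> (norm u0)\<^sup>2 - (norm u)\<^sup>2" .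
  have e1: "A * (1/2 * ((1 - \<delta>)\<^sup>2 / (1 + \<delta>))) \<le> ((norm u0)\<^sup>2 - (norm u)\<^sup>2) / N"
    using m3 Npos by (simp add: pos_le_divide_eq mult.commute)
  have e2: "((norm u0)\<^sup>2 - (norm u)\<^sup>2) / N = (norm u0)\<^sup>2 / real CARD('n) - (norm u)\<^sup>2 / real CARD('n)"
    unfolding N_def by (simp add: diff_divide_distrib)
  have e3: "1/2 * ((1 - \<delta>)\<^sup>2 / (1 + \<delta>)) * (1 - \<rho>\<^sup>2) * \<kappa>l = A * (1/2 * ((1 - \<delta>)\<^sup>2 / (1 + \<delta>)))"
    unfolding A_def by (simp only: mult.assoc mult.commute mult.left_commute)
  show "(norm u0)\<^sup>2 / real CARD('n) - (norm u)\<^sup>2 / real CARD('n)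
             \<ge> 1/2 * ((1 - \<delta>)\<^sup>2 / (1 + \<delta>)) * (1 - \<rho>\<^sup>2) * \<kappa>l"
    unfolding e3 e2[symmetric] by (rule e1)
qed


end
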